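(* Let $m\ge 1$, let $D_{2m}=\langle u,v : u^m=e=v^2,\ vu=u^{m-1}v\rangle$, let $C_m=\langle u\rangle$ and $C_mv=\{u^iv: 0\le i<m\}$. If $S\subseteq C_mv$, then $D_{2m}$ has an $S$-sequencing.
   Context: For a group $G$ with identity $e$ and a set $S\subseteq G\setminus\{e\}$ with $|S|=k$, an $S$-sequencing of $G$ is an ordering $(g_1,\dots,g_k)$ of the elements of $S$ (each used exactly once) such that the partial products $h_0=e$, $h_i=g_1g_2\cdots g_i$ ($1\le i\le k$) are pairwise distinct. *)

theory Defs
  imports "HOL-Algebra.Group"
begin

definition partial_prod :: "('a, 'b) monoid_scheme \<Rightarrow> 'a list \<Rightarrow> nat \<Rightarrow> 'a" where
  "partial_prod G gs i = foldr (\<lambda>g acc. g \<otimes>\<^bsub>G\<^esub> acc) (take i gs) \<one>\<^bsub>G\<^esub>"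

definition is_S_sequencing :: "('a, 'b) monoid_scheme \<Rightarrow> 'a set \<Rightarrow> 'a list \<Rightarrow> bool" where
  "is_S_sequencing G S gs \<longleftrightarrow>
     S \<subseteq> carrier G - {\<one>\<^bsub>G\<^esub>} \<and> distinct gs \<and> set gs = S \<and>
     distinct (map (partial_prod G gs) [0..<length gs + 1])"

definition has_S_sequencing :: "('a, 'b) monoid_scheme \<Rightarrow> 'a set \<Rightarrow> bool" where
  "has_S_sequencing G S \<longleftrightarrow> (\<exists>gs. is_S_sequencing G S gs)"

text \<open>The dihedral group D_{2m} of order 2m, concretely: the pair (i, b) stands for u^i v^b
  (0 \<le> i < m). Multiplication: u^i v^a u^j v^b = u^(i + (-1)^a j) v^(a+b).\<close>
definition dihedral :: "nat \<Rightarrow> (nat \<times> bool) monoid" where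
  "dihedral m = \<lparr> carrier = {(i, b). i < m},
     mult = (\<lambda>(i, a) (j, b). ((if a then i + (m - j) else i + j) mod m, a \<noteq> b)),
     one = (0, False) \<rparr>"

definition dih_u :: "nat \<Rightarrow> nat \<times> bool" where "dih_u m = (1 mod m, False)"
definition dih_v :: "nat \<Rightarrow> nat \<times> bool" where "dih_v m = (0, True)"

definition dih_Cm :: "nat \<Rightarrow> (nat \<times> bool) set" where
  "dih_Cm m = {dih_u m [^]\<^bsub>dihedral m\<^esub> i | i. i < m}"
definition dih_Cmv :: "nat \<Rightarrow> (nat \<times> bool) set" where
  "dih_Cmv m = {(dih_u m [^]\<^bsub>dihedral m\<^esub> i) \<otimes>\<^bsub>dihedral m\<^esub> dih_v m | i. i < m}"



end

theory Submission imports Defs begin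
definition altf :: "nat list \<Rightarrow> nat \<Rightarrow> int" where
  "altf xs i = foldr (\<lambda>a acc. int a - acc) (take i xs) 0"

lemma altf_Cons: "altf (a # xs) (Suc i) = int a - altf xs i" by (simp add: altf_def)
lemma altf_0[simp]: "altf xs 0 = 0" by (simp add: altf_def)

lemma altf_Suc: "i < length xs \<Longrightarrow> altf xs (Suc i) = altf xs i + (-1)^i * int (xs!i)"
proof (induction xs arbitrary: i)
  case Nil then show ?case by simp
next
  case (Cons a xs)
  then show ?case
    by (cases i) (auto simp: altf_Cons altf_def)
qed

lemma pp_formula:
  assumes "m \<ge> 1" "\<forall>a\<in>set xs. a < m" "i \<le> length xs"
  shows "partial_prod (dihedral m) (map (\<lambda>a. (a, True)) xs) i = (nat (altf xs i mod int m), odd i)"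
  using assms(2,3)
proof (induction xs arbitrary: i)
  case Nil then show ?case by (simp add: partial_prod_def dihedral_def altf_def)
next
  case (Cons a xs)
  show ?case
  proof (cases i)
    case 0 then show ?thesis by (simp add: partial_prod_def dihedral_def)
  next
    case (Suc j)
    have IH: "partial_prod (dihedral m) (map (\<lambda>a. (a, True)) xs) j = (nat (altf xs j mod int m), odd j)"
      using Cons Suc by auto
    have pp: "partial_prod (dihedral m) (map (\<lambda>a. (a, True)) (a#xs)) (Suc j)
       = (a, True) \<otimes>\<^bsub>dihedral m\<^esub> partial_prod (dihedral m) (map (\<lambda>a. (a, True)) xs) j"
      by (simp add: partial_prod_def)
    define r where "r = altf xs j"
    have mpos: "int m > 0" using assms(1) by simp
    have n: "int (nat (r mod int m)) = r mod int m" using mpos by simp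
    have le: "nat (r mod int m) \<le> m" unfolding nat_le_iff
      using pos_mod_bound[OF mpos, of r] by linarith
    have "int ((a + (m - nat (r mod int m))) mod m) = (int a + int m - r mod int m) mod int m"
      using le n by (simp add: zmod_int of_nat_diff)
    also have "\<dots> = ((int a - r mod int m) + int m) mod int m"
      by (simp add: algebra_simps)
    also have "\<dots> = (int a - r mod int m) mod int m" by (rule mod_add_self2)
    also have "\<dots> = (int a - r) mod int m" by (rule mod_diff_right_eq)
    finally have eq0: "int ((a + (m - nat (r mod int m))) mod m) = (int a - r) mod int m" .
    have eq: "(a + (m - nat (r mod int m))) mod m = nat ((int a - r) mod int m)"
      using arg_cong[OF eq0, of nat] by simp
    show ?thesis using IH pp eq
      by (simp add: Suc dihedral_def altf_Cons r_def)
  qed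
qed

lemma Cmv: "m \<ge> 1 \<Longrightarrow> dih_Cmv m = {(i, True) | i. i < m}"
proof -
  assume m: "m \<ge> 1"
  have pw: "dih_u m [^]\<^bsub>dihedral m\<^esub> i = (i mod m, False)" for i
  proof (induction i)
    case 0 then show ?case by (simp add: dihedral_def)
  next
    case (Suc i) then show ?case
      by (simp add: dihedral_def dih_u_def mod_Suc_eq)
  qed
  have "(dih_u m [^]\<^bsub>dihedral m\<^esub> i) \<otimes>\<^bsub>dihedral m\<^esub> dih_v m = (i mod m, True)" for i
    unfolding pw by (simp add: dih_v_def dihedral_def)
  then show ?thesis unfolding dih_Cmv_def using m
    by (auto, metis mod_less)
qed

lemma altf_bounds:
  assumes "sorted_wrt (<) xs" "1 \<le> i" "i \<le> length xs"
  shows "(even i \<longrightarrow> int (xs!0) - int (xs!(i-1)) \<le> altf xs i \<and> altf xs i \<le> 0) \<and>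
         (odd i \<longrightarrow> int (xs!0) \<le> altf xs i \<and> altf xs i \<le> int (xs!(i-1)))"
  using assms(2,3)
proof (induction i rule: dec_induct)
  case base
  then show ?case using altf_Suc[of 0 xs] by (cases xs) auto
next
  case (step n)
  have lt: "xs!(n-1) < xs!n" using assms(1) step
    by (simp add: sorted_wrt_nth_less)
  have "altf xs (Suc n) = altf xs n + (-1)^n * int (xs!n)" using step by (simp add: altf_Suc)
  then show ?case using step lt by (cases "even n") auto
qed

lemma altf_mono:
  assumes "sorted_wrt (<) xs" "i + 2 \<le> length xs"
  shows "(even i \<longrightarrow> altf xs (i+2) < altf xs i) \<and> (odd i \<longrightarrow> altf xs i < altf xs (i+2))"
proof -
  have lt: "xs!i < xs!(Suc i)" using assms by (simp add: sorted_wrt_nth_less)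
  have "altf xs (Suc (Suc i)) = altf xs i + (-1)^i * int (xs!i) + (-1)^(Suc i) * int (xs!(Suc i))"
    using assms by (simp add: altf_Suc)
  then show ?thesis using lt by (cases "even i") auto
qed

lemma altf_mono2:
  assumes "sorted_wrt (<) xs" "i + 2 * Suc d \<le> length xs"
  shows "(even i \<longrightarrow> altf xs (i + 2 * Suc d) < altf xs i) \<and> (odd i \<longrightarrow> altf xs i < altf xs (i + 2 * Suc d))"
  using assms(2)
proof (induction d)
  case 0 then show ?case using altf_mono[OF assms(1), of i] by simp
next
  case (Suc d)
  have "i + 2 * Suc d + 2 \<le> length xs" using Suc by simp
  from altf_mono[OF assms(1) this] Suc show ?case
    by (cases "even i") (auto simp: add.assoc)
qed

lemma int_mod_inj:
  fixes a b :: int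
  assumes "a mod m = b mod m" "\<bar>a - b\<bar> < m"
  shows "a = b"
proof -
  have "m dvd (a - b)" using assms(1) by (simp add: mod_eq_dvd_iff)
  then obtain c where c: "a - b = m * c" by blast
  have "m > 0" using assms(2) by linarith
  show ?thesis
  proof (rule ccontr)
    assume "a \<noteq> b"
    then have "c \<noteq> 0" using c by auto
    then have "\<bar>m * c\<bar> \<ge> m" using \<open>m > 0\<close> by (simp add: abs_mult)
    then show False using c assms(2) by simp
  qed
qed
lemma altf_range:
  assumes "sorted_wrt (<) xs" "\<forall>a\<in>set xs. a < m" "i \<le> length xs" "0 < m"
  shows "(even i \<longrightarrow> - int m < altf xs i \<and> altf xs i \<le> 0) \<and>
         (odd i \<longrightarrow> 0 \<le> altf xs i \<and> altf xs i < int m)"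
proof (cases "i = 0")
  case True then show ?thesis using assms(4) by simp
next
  case False
  then have i1: "1 \<le> i" by simp
  have "xs!(i-1) < m" using assms(2,3) i1 by simp
  then show ?thesis using altf_bounds[OF assms(1) i1 assms(3)] by auto
qed

theorem lemma3p1:
  fixes m :: nat and S :: "(nat \<times> bool) set"
  assumes "m \<ge> 1"
    and "S \<subseteq> dih_Cmv m"
  shows "has_S_sequencing (dihedral m) S"
proof -
  have SS: "S \<subseteq> {(i, True) | i. i < m}" using assms Cmv by simp
  define A where "A = fst ` S"
  have Am: "A \<subseteq> {..<m}" using SS A_def by auto
  then have finA: "finite A" using finite_subset by blast
  define xs where "xs = sorted_list_of_set A"
  have sx: "sorted_wrt (<) xs" unfolding xs_def by simp
  have setx: "set xs = A" unfolding xs_def using finA by simp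
  have distx: "distinct xs" unfolding xs_def by simp
  have xm: "\<forall>a\<in>set xs. a < m" using setx Am by auto
  define gs where "gs = map (\<lambda>a. (a, True)) xs"
  have setgs: "set gs = S" unfolding gs_def using setx A_def SS by force
  have distgs: "distinct gs" unfolding gs_def using distx by (simp add: distinct_map inj_on_def)
  have Sc: "S \<subseteq> carrier (dihedral m) - {\<one>\<^bsub>dihedral m\<^esub>}" using SS by (auto simp: dihedral_def)
  define k where "k = length xs"
  have lg: "length gs = k" unfolding gs_def k_def by simp
  have pp: "partial_prod (dihedral m) gs i = (nat (altf xs i mod int m), odd i)" if "i \<le> k" for i
    unfolding gs_def using pp_formula[OF assms(1) xm] that k_def by simp
  have neq: "partial_prod (dihedral m) gs i \<noteq> partial_prod (dihedral m) gs j"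
    if ij: "i < j" "j \<le> k" for i j
  proof
    assume eq: "partial_prod (dihedral m) gs i = partial_prod (dihedral m) gs j"
    then have par: "odd i = odd j" and md: "nat (altf xs i mod int m) = nat (altf xs j mod int m)"
      using pp ij by auto
    have mpos: "int m > 0" using assms(1) by simp
    have md2: "altf xs i mod int m = altf xs j mod int m"
      using md mpos by (metis Euclidean_Rings.pos_mod_sign nat_eq_iff2)
    obtain d where jd: "j = i + 2 * Suc d"
    proof -
      have "even (j - i)" using par ij by auto
      then obtain e where e: "j - i = 2 * e" by blast
      then have "e \<noteq> 0" using ij by auto
      then obtain d where "e = Suc d" using not0_implies_Suc by blast
      then show ?thesis using that[of d] e ij by simp
    qed
    have ri: "(even i \<longrightarrow> - int m < altf xs i \<and> altf xs i \<le> 0) \<and>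
         (odd i \<longrightarrow> 0 \<le> altf xs i \<and> altf xs i < int m)"
      using altf_range[OF sx xm] ij k_def assms(1) by simp
    have rj: "(even j \<longrightarrow> - int m < altf xs j \<and> altf xs j \<le> 0) \<and>
         (odd j \<longrightarrow> 0 \<le> altf xs j \<and> altf xs j < int m)"
      using altf_range[OF sx xm] ij k_def assms(1) by simp
    have "\<bar>altf xs i - altf xs j\<bar> < int m" using ri rj par by auto
    then have "altf xs i = altf xs j" using int_mod_inj md2 by blast
    moreover have "altf xs i \<noteq> altf xs j"
      using altf_mono2[OF sx, of i d] jd ij k_def by (cases "even i") auto
    ultimately show False by simp
  qed
  have "distinct (map (partial_prod (dihedral m) gs) [0..<length gs + 1])"
    unfolding distinct_map
  proof
    show "distinct [0..<length gs + 1]" by simp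
    show "inj_on (partial_prod (dihedral m) gs) (set [0..<length gs + 1])"
      unfolding inj_on_def lg
    proof (intro ballI impI)
      fix i j assume "i \<in> set [0..<k + 1]" "j \<in> set [0..<k + 1]"
        "partial_prod (dihedral m) gs i = partial_prod (dihedral m) gs j"
      then show "i = j" using neq by (metis atLeastLessThan_iff linorder_neqE_nat less_Suc_eq_le set_upt Suc_eq_plus1)
    qed
  qed
  then show ?thesis unfolding has_S_sequencing_def is_S_sequencing_def
    using Sc distgs setgs by blast
qed
end
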